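(* Let $(E,d)$ and $(\tilde E,\tilde d)$ be metric spaces whose Borel $\sigma$-algebras make them standard Borel spaces, and let $h:E\to\tilde E$ be a (bijective) isometry. Let $\nu$ be a Radon probability measure on $E$ and let $h_\#\nu$ be the push-forward, $h_\#\nu(B)=\nu(h^{-1}(B))$. Then for every closed set $A\subset\mathrm{Supp}(h_\#\nu)$ such that the MaxEnt posterior of $(\nu,h^{-1}(A))$ on $(E,d)$ exists, the MaxEnt posterior of $(h_\#\nu,A)$ on $(\tilde E,\tilde d)$ also exists, and $$h_\#\nu(B\mid A)=\nu\big(h^{-1}(B)\mid h^{-1}(A)\big)\quad\text{for every open set }B\subset\tilde E.$$
   Context: MaxEnt posterior on a metric space $(W,\rho)$ (Borel $\sigma$-algebra, standard Borel), with a fixed truncation parameter $R>0$ used in both spaces: for a prior Radon probability $\nu$ and closed $A\subset\mathrm{Supp}(\nu)$ (support = complement of the union of $\nu$-null open sets), consider for each $\sigma>0$ the problem $\inf_\mu\{\mathrm{Ent}_\nu(\mu):\mu(W)=1,\ \int_W\rho_R(w,A)^2\,d\mu(w)\le\sigma^2\}$, with $\rho(w,A)=\inf_{a\in A}\rho(w,a)$, $\rho_R=\min(\rho,R)$, $\mathrm{Ent}_\nu(\mu)=\int\frac{d\mu}{d\nu}\ln\frac{d\mu}{d\nu}\,d\nu$ if $\mu\ll\nu$, $+\infty$ otherwise. If for every $\sigma>0$ the infimum is attained by a unique $\mu_\sigma$ and $\mu_\sigma$ converges weakly as $\sigma\to0$, the limit is the MaxEnt posterior $\nu(\cdot\mid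 A)$. *)

theory Defs
  imports "HOL-Probability.Probability"
begin

definition standard_borel_type :: "'a::metric_space itself \<Rightarrow> bool" where
  "standard_borel_type _ \<longleftrightarrow>
     (\<exists>T :: 'a topology. completely_metrizable_space T \<and> separable_space T \<and>
        topspace T = UNIV \<and>
        sigma_sets UNIV (Collect (openin T)) = sets (borel :: 'a measure))"

(* Radon probability measure on the Borel sets of a metric space
   (inner regular by compact sets; local finiteness is automatic for probabilities) *)
definition radon_prob :: "'a::metric_space measure \<Rightarrow> bool" where
  "radon_prob \<nu> \<longleftrightarrow> prob_space \<nu> \<and> sets \<nu> = sets borel \<and>
     (\<forall>B\<in>sets borel. emeasure \<nu> B = (SUP K\<in>{K. compact K \<and> K \<subseteq> B}. emeasure \<nu> K))"

definition Supp :: "'a::topological_space measure \<Rightarrow> 'a set" where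
  "Supp \<nu> = - \<Union>{U. open U \<and> emeasure \<nu> U = 0}"

(* truncated distance rho_R(w,A) = min(inf_{a\<in>A} dist w a, R); inf over {} is +\<infinity> *)
definition rhoR :: "real \<Rightarrow> 'a::metric_space set \<Rightarrow> 'a \<Rightarrow> real" where
  "rhoR R A w = (if A = {} then R else min (infdist w A) R)"

(* Since f ln f \<ge> -1/e and \<nu> is finite, non-integrability means the integral is +\<infinity>. *)
definition Ent :: "'a measure \<Rightarrow> 'a measure \<Rightarrow> ereal" where
  "Ent \<nu> \<mu> =
    (if absolutely_continuous \<nu> \<mu> \<and> sets \<mu> = sets \<nu> then
       (let f = (\<lambda>x. enn2real (RN_deriv \<nu> \<mu> x)) in
        if integrable \<nu> (\<lambda>x. f x * ln (f x))
        then ereal (\<integral>x. f x * ln (f x) \<partial>\<nu>) else \<infinity>)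
     else \<infinity>)"

definition maxent_feasible :: "real \<Rightarrow> 'a::metric_space set \<Rightarrow> real \<Rightarrow> 'a measure \<Rightarrow> bool" where
  "maxent_feasible R A \<sigma> \<mu> \<longleftrightarrow> sets \<mu> = sets borel \<and> emeasure \<mu> UNIV = 1 \<and>
     (\<integral>\<^sup>+w. ennreal ((rhoR R A w)\<^sup>2) \<partial>\<mu>) \<le> ennreal (\<sigma>\<^sup>2)"

definition maxent_minimizer ::
  "'a::metric_space measure \<Rightarrow> real \<Rightarrow> 'a set \<Rightarrow> real \<Rightarrow> 'a measure \<Rightarrow> bool" where
  "maxent_minimizer \<nu> R A \<sigma> \<mu> \<longleftrightarrow> maxent_feasible R A \<sigma> \<mu> \<and>
     (\<forall>\<mu>'. maxent_feasible R A \<sigma> \<mu>' \<longrightarrow> Ent \<nu> \<mu> \<le> Ent \<nu> \<mu>')"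

definition weak_conv_filter :: "('i \<Rightarrow> 'a::metric_space measure) \<Rightarrow> 'a measure \<Rightarrow> 'i filter \<Rightarrow> bool" where
  "weak_conv_filter M P F \<longleftrightarrow>
     (\<forall>f :: 'a \<Rightarrow> real. continuous_on UNIV f \<and> bounded (range f) \<longrightarrow>
        ((\<lambda>i. \<integral>x. f x \<partial>M i) \<longlongrightarrow> (\<integral>x. f x \<partial>P)) F)"

definition is_maxent_posterior ::
  "'a::metric_space measure \<Rightarrow> real \<Rightarrow> 'a set \<Rightarrow> 'a measure \<Rightarrow> bool" where
  "is_maxent_posterior \<nu> R A P \<longleftrightarrow>
     radon_prob \<nu> \<and> closed A \<and> A \<subseteq> Supp \<nu> \<and>
     (\<forall>\<sigma>>0. \<exists>!\<mu>. maxent_minimizer \<nu> R A \<sigma> \<mu>) \<and>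
     prob_space P \<and> sets P = sets borel \<and>
     weak_conv_filter (\<lambda>\<sigma>. THE \<mu>. maxent_minimizer \<nu> R A \<sigma> \<mu>) P (at_right 0)"

end

theory Submission
  imports Defs
begin

lemma iso_cont:
  assumes "\<And>x y. dist (h x) (h y) = dist x y"
  shows "continuous_on UNIV h"
  unfolding continuous_on_iff using assms by metis

lemma iso_meas:
  assumes "\<And>x y. dist (h x) (h y) = dist x y"
  shows "h \<in> borel_measurable borel"
  by (rule borel_measurable_continuous_onI[OF iso_cont[OF assms]])

lemma inv_iso:
  assumes "bij h" "\<And>x y. dist (h x) (h y) = dist x y"
  shows "bij (inv h)" "\<And>x y. dist (inv h x) (inv h y) = dist x y"
  using assms bij_imp_bij_inv apply blast
  by (metis assms bij_inv_eq_iff)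

lemma distr_inv:
  assumes "bij h" "\<And>x y. dist (h x) (h y) = dist x y" "sets \<mu> = sets borel"
  shows "distr (distr \<mu> borel h) borel (inv h) = \<mu>"
proof -
  have m: "h \<in> measurable \<mu> borel" using iso_meas[OF assms(2)] assms(3)
    by (simp add: measurable_def sets_eq_imp_space_eq[OF assms(3)])
  have "distr (distr \<mu> borel h) borel (inv h) = distr \<mu> borel (inv h \<circ> h)"
    by (rule distr_distr[OF iso_meas[OF inv_iso(2)[OF assms(1,2)]] m])
  also have "inv h \<circ> h = (\<lambda>x. x)" using assms(1) by (simp add: bij_is_inj fun_eq_iff)
  also have "distr \<mu> borel (\<lambda>x. x) = \<mu>" by (rule distr_id2) (simp add: assms(3))
  finally show ?thesis .
qed


lemma rhoR_iso:
  assumes "bij h" "\<And>x y. dist (h x) (h y) = dist x y"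
  shows "rhoR R A (h w) = rhoR R (h -` A) w"
proof -
  have e: "A = {} \<longleftrightarrow> h -` A = {}" using assms(1)
    by (metis bij_is_surj surj_image_vimage_eq image_empty vimage_empty)
  have A: "A = h ` (h -` A)" using assms(1) by (simp add: bij_is_surj surj_image_vimage_eq)
  have "infdist (h w) A = infdist w (h -` A)"
  proof -
    have "(INF a\<in>A. dist (h w) a) = (INF a\<in>h ` (h -` A). dist (h w) a)" using A by simp
    also have "\<dots> = (INF a\<in>h -` A. dist (h w) (h a))" by (simp only: image_comp o_def)
    also have "\<dots> = (INF a\<in>h -` A. dist w a)" using assms(2) by simp
    finally show ?thesis unfolding infdist_def using e by simp
  qed
  then show ?thesis unfolding rhoR_def using e by simp
qed

lemma rhoR_cont: "continuous_on UNIV (rhoR R A)"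
proof (cases "A = {}")
  case True then show ?thesis unfolding rhoR_def by simp
next
  case False then show ?thesis unfolding rhoR_def
    by (simp add: continuous_on_min continuous_on_infdist continuous_on_id continuous_on_const)
qed

lemma rhoR_meas[measurable]: "(\<lambda>w. ennreal ((rhoR R A w)\<^sup>2)) \<in> borel_measurable borel"
proof -
  have "rhoR R A \<in> borel_measurable borel" by (rule borel_measurable_continuous_onI[OF rhoR_cont])
  then show ?thesis by measurable
qed

lemma feasible_distr:
  assumes "bij h" "\<And>x y. dist (h x) (h y) = dist x y" "sets \<mu> = sets borel"
  shows "maxent_feasible R A \<sigma> (distr \<mu> borel h) \<longleftrightarrow> maxent_feasible R (h -` A) \<sigma> \<mu>"
proof -
  have sp: "space \<mu> = UNIV" using sets_eq_imp_space_eq[OF assms(3)] by simp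
  have m: "h \<in> measurable \<mu> borel" using iso_meas[OF assms(2)] assms(3)
    by (simp add: measurable_def sp)
  have "emeasure (distr \<mu> borel h) UNIV = emeasure \<mu> UNIV"
    using m by (simp add: emeasure_distr sp)
  moreover have "(\<integral>\<^sup>+w. ennreal ((rhoR R A w)\<^sup>2) \<partial>distr \<mu> borel h) =
      (\<integral>\<^sup>+w. ennreal ((rhoR R (h -` A) w)\<^sup>2) \<partial>\<mu>)"
  proof -
    have "(\<lambda>w. ennreal ((rhoR R A w)\<^sup>2)) \<in> borel_measurable (distr \<mu> borel h)"
      using rhoR_meas measurable_cong_sets[OF sets_distr refl] by blast
    then show ?thesis by (simp add: nn_integral_distr[OF m] rhoR_iso[OF assms(1,2)])
  qed
  ultimately show ?thesis unfolding maxent_feasible_def using assms(3) by simp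
qed

lemma ac_distr:
  assumes "absolutely_continuous \<nu> \<mu>" "sets \<mu> = sets \<nu>" "h \<in> measurable \<nu> M"
  shows "absolutely_continuous (distr \<nu> M h) (distr \<mu> M h)"
proof -
  have m2: "h \<in> measurable \<mu> M" using assms(2,3) measurable_cong_sets by blast
  have sp: "space \<mu> = space \<nu>" using sets_eq_imp_space_eq[OF assms(2)] .
  show ?thesis unfolding absolutely_continuous_def
  proof
    fix N assume "N \<in> null_sets (distr \<nu> M h)"
    then have "h -` N \<inter> space \<nu> \<in> null_sets \<nu>" "N \<in> sets M"
      using null_sets_distr_iff[OF assms(3)] by auto
    then have "h -` N \<inter> space \<mu> \<in> null_sets \<mu>" using assms(1) sp
      unfolding absolutely_continuous_def by auto
    then show "N \<in> null_sets (distr \<mu> M h)" using null_sets_distr_iff[OF m2] \<open>N \<in> sets M\<close> by auto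
  qed
qed

lemma Ent_distr:
  assumes "bij h" "\<And>x y. dist (h x) (h y) = dist x y" "sets \<mu> = sets borel"
    "sets \<nu> = sets borel" "prob_space \<nu>"
  shows "Ent (distr \<nu> borel h) (distr \<mu> borel h) = Ent \<nu> \<mu>"
proof -
  let ?g = "inv h"
  have sp: "space \<nu> = UNIV" using sets_eq_imp_space_eq[OF assms(4)] by simp
  have mh: "h \<in> measurable \<nu> borel" using iso_meas[OF assms(2)] assms(4)
    by (simp add: measurable_def sp)
  have mg: "?g \<in> measurable borel \<nu>" using iso_meas[OF inv_iso(2)[OF assms(1,2)]] assms(4)
    by (simp add: measurable_def sp)
  have mg': "?g \<in> measurable (distr \<nu> borel h) borel" 
    using iso_meas[OF inv_iso(2)[OF assms(1,2)]] by (simp add: measurable_def)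
  have ss: "sets \<mu> = sets \<nu>" using assms(3,4) by simp
  show ?thesis
  proof (cases "absolutely_continuous \<nu> \<mu>")
    case False
    have "\<not> absolutely_continuous (distr \<nu> borel h) (distr \<mu> borel h)"
    proof
      assume "absolutely_continuous (distr \<nu> borel h) (distr \<mu> borel h)"
      from ac_distr[OF this _ mg']
      have "absolutely_continuous (distr (distr \<nu> borel h) borel ?g) (distr (distr \<mu> borel h) borel ?g)"
        by simp
      then show False using False distr_inv[OF assms(1,2)] assms(3,4) by simp
    qed
    then show ?thesis using False unfolding Ent_def by simp
  next
    case True
    interpret sigma_finite_measure \<nu> using assms(5) prob_space_imp_sigma_finite by blast
    have ac': "absolutely_continuous (distr \<nu> borel h) (distr \<mu> borel h)"
      by (rule ac_distr[OF True ss mh])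
    have inv: "\<forall>x\<in>space \<nu>. ?g (h x) = x" using assms(1) by (simp add: bij_is_inj)
    have AE: "AE x in \<nu>. RN_deriv (distr \<nu> borel h) (distr \<mu> borel h) (h x) = RN_deriv \<nu> \<mu> x"
      by (rule RN_deriv_distr[OF mh mg inv ac' ss])
    define F where "F = (\<lambda>y. enn2real (RN_deriv (distr \<nu> borel h) (distr \<mu> borel h) y))"
    define f where "f = (\<lambda>x. enn2real (RN_deriv \<nu> \<mu> x))"
    have AE2: "AE x in \<nu>. F (h x) * ln (F (h x)) = f x * ln (f x)"
      using AE unfolding F_def f_def by eventually_elim simp
    have mF: "(\<lambda>y. F y * ln (F y)) \<in> borel_measurable borel"
    proof -
      have "RN_deriv (distr \<nu> borel h) (distr \<mu> borel h) \<in> borel_measurable borel"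
        using borel_measurable_RN_deriv[of "distr \<nu> borel h" "distr \<mu> borel h"]
        by (simp add: measurable_def)
      then show ?thesis unfolding F_def by measurable
    qed
    have mFh: "(\<lambda>x. F (h x) * ln (F (h x))) \<in> borel_measurable \<nu>"
      using measurable_compose[OF mh mF] by (simp add: o_def)
    have mf: "(\<lambda>x. f x * ln (f x)) \<in> borel_measurable \<nu>" unfolding f_def by measurable
    have I1: "integrable (distr \<nu> borel h) (\<lambda>y. F y * ln (F y)) \<longleftrightarrow> integrable \<nu> (\<lambda>x. f x * ln (f x))"
      using integrable_distr_eq[OF mh mF] integrable_cong_AE[OF mFh mf AE2] by simp
    have I2: "(\<integral>y. F y * ln (F y) \<partial>distr \<nu> borel h) = (\<integral>x. f x * ln (f x) \<partial>\<nu>)"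
      using integral_distr[OF mh mF] integral_cong_AE[OF mFh mf AE2] by simp
    show ?thesis unfolding Ent_def using True ac' I1 I2 ss
      by (simp add: Let_def F_def[symmetric] f_def[symmetric])
  qed
qed


lemma minimizer_distr:
  assumes "bij h" "\<And>x y. dist (h x) (h y) = dist x y" "sets \<nu> = sets borel" "prob_space \<nu>"
    "maxent_minimizer \<nu> R (h -` A) \<sigma> \<mu>"
  shows "maxent_minimizer (distr \<nu> borel h) R A \<sigma> (distr \<mu> borel h)"
proof -
  have bg: "bij (inv h)" and ig: "\<And>x y. dist (inv h x) (inv h y) = dist x y"
    using inv_iso[OF assms(1,2)] by auto
  have ih: "inv (inv h) = h" using assms(1) by (rule inv_inv_eq)
  have f: "maxent_feasible R (h -` A) \<sigma> \<mu>" and mn: "\<And>\<mu>'. maxent_feasible R (h -` A) \<sigma> \<mu>' \<Longrightarrow> Ent \<nu> \<mu> \<le> Ent \<nu> \<mu>'"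
    using assms(5) unfolding maxent_minimizer_def by auto
  have sm: "sets \<mu> = sets borel" using f unfolding maxent_feasible_def by simp
  have f': "maxent_feasible R A \<sigma> (distr \<mu> borel h)" using feasible_distr[OF assms(1,2) sm] f by simp
  have E: "Ent (distr \<nu> borel h) (distr \<mu> borel h) = Ent \<nu> \<mu>"
    by (rule Ent_distr[OF assms(1,2) sm assms(3,4)])
  show ?thesis unfolding maxent_minimizer_def
  proof (intro conjI allI impI f')
    fix \<mu>'' assume fe: "maxent_feasible R A \<sigma> \<mu>''"
    have s2: "sets \<mu>'' = sets borel" using fe unfolding maxent_feasible_def by simp
    define mz where "mz = distr \<mu>'' borel (inv h)"
    have s0: "sets mz = sets borel" unfolding mz_def by simp
    have bk: "distr mz borel h = \<mu>''" unfolding mz_def using distr_inv[OF bg ig s2] ih by simp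
    have "maxent_feasible R (h -` A) \<sigma> mz" using feasible_distr[OF assms(1,2) s0] fe bk by simp
    then have "Ent \<nu> \<mu> \<le> Ent \<nu> mz" by (rule mn)
    also have "Ent \<nu> mz = Ent (distr \<nu> borel h) \<mu>''"
      using Ent_distr[OF assms(1,2) s0 assms(3,4)] bk by simp
    finally show "Ent (distr \<nu> borel h) (distr \<mu> borel h) \<le> Ent (distr \<nu> borel h) \<mu>''" using E by simp
  qed
qed

lemma meas_P:
  assumes "sets P = sets borel" "continuous_on UNIV f"
  shows "f \<in> borel_measurable P"
  using borel_measurable_continuous_onI[OF assms(2)] measurable_cong_sets[OF assms(1) refl] by blast

lemma radon_distr:
  assumes "bij h" "\<And>x y. dist (h x) (h y) = dist x y" "radon_prob \<nu>"
  shows "radon_prob (distr \<nu> borel h)"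
proof -
  have pn: "prob_space \<nu>" and sn: "sets \<nu> = sets borel"
    and reg: "\<And>B. B \<in> sets borel \<Longrightarrow> emeasure \<nu> B = (SUP K\<in>{K. compact K \<and> K \<subseteq> B}. emeasure \<nu> K)"
    using assms(3) unfolding radon_prob_def by auto
  have sp: "space \<nu> = UNIV" using sets_eq_imp_space_eq[OF sn] by simp
  have mh: "h \<in> measurable \<nu> borel" using iso_meas[OF assms(2)] sn
    by (simp add: measurable_def sp)
  have ch: "continuous_on UNIV h" by (rule iso_cont[OF assms(2)])
  have cg: "continuous_on UNIV (inv h)" by (rule iso_cont[OF inv_iso(2)[OF assms(1,2)]])
  have ed: "\<And>B. B \<in> sets borel \<Longrightarrow> emeasure (distr \<nu> borel h) B = emeasure \<nu> (h -` B)"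
    using mh by (simp add: emeasure_distr sp)
  have pd: "prob_space (distr \<nu> borel h)"
    using prob_space.prob_space_distr[OF pn mh] .
  have "emeasure (distr \<nu> borel h) B = (SUP K\<in>{K. compact K \<and> K \<subseteq> B}. emeasure (distr \<nu> borel h) K)"
    if B: "B \<in> sets borel" for B
  proof -
    have hB: "h -` B \<in> sets borel" using B iso_meas[OF assms(2)] by (simp add: measurable_def)
    have im: "{K. compact K \<and> K \<subseteq> B} = (\<lambda>K. h ` K) ` {K. compact K \<and> K \<subseteq> h -` B}"
    proof (intro equalityI subsetI)
      fix K' assume K': "K' \<in> {K. compact K \<and> K \<subseteq> B}"
      have e1: "K' = h ` (h -` K')" using assms(1) by (simp add: bij_is_surj surj_image_vimage_eq)
      have e2: "h -` K' = inv h ` K'" using assms(1) by (simp add: bij_vimage_eq_inv_image)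
      have "compact (h -` K')" using e2 K' compact_continuous_image[OF continuous_on_subset[OF cg]] by auto
      then show "K' \<in> (\<lambda>K. h ` K) ` {K. compact K \<and> K \<subseteq> h -` B}" using K' e1 by blast
    next
      fix K' assume "K' \<in> (\<lambda>K. h ` K) ` {K. compact K \<and> K \<subseteq> h -` B}"
      then obtain K where K: "compact K" "K \<subseteq> h -` B" "K' = h ` K" by auto
      then show "K' \<in> {K. compact K \<and> K \<subseteq> B}"
        using compact_continuous_image[OF continuous_on_subset[OF ch]] by auto
    qed
    have "(SUP K\<in>{K. compact K \<and> K \<subseteq> B}. emeasure (distr \<nu> borel h) K)
        = (SUP K\<in>{K. compact K \<and> K \<subseteq> h -` B}. emeasure (distr \<nu> borel h) (h ` K))"
      unfolding im by (simp add: image_comp o_def)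
    also have "\<dots> = (SUP K\<in>{K. compact K \<and> K \<subseteq> h -` B}. emeasure \<nu> K)"
    proof (rule SUP_cong[OF refl])
      fix K assume "K \<in> {K. compact K \<and> K \<subseteq> h -` B}"
      then have "compact (h ` K)" using compact_continuous_image[OF continuous_on_subset[OF ch]] by auto
      then have "h ` K \<in> sets borel" by (simp add: compact_imp_closed borel_closed)
      then show "emeasure (distr \<nu> borel h) (h ` K) = emeasure \<nu> K"
        using ed assms(1) by (simp add: bij_is_inj inj_vimage_image_eq)
    qed
    also have "\<dots> = emeasure \<nu> (h -` B)" using reg[OF hB] by simp
    finally show ?thesis using ed[OF B] by simp
  qed
  then show ?thesis unfolding radon_prob_def using pd by simp
qed


lemma posterior_distr:
  assumes "bij h" "\<And>x y. dist (h x) (h y) = dist x y"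
    "closed A" "A \<subseteq> Supp (distr \<nu> borel h)"
    "is_maxent_posterior \<nu> R (h -` A) P"
  shows "is_maxent_posterior (distr \<nu> borel h) R A (distr P borel h)"
proof -
  have rad: "radon_prob \<nu>" and uq: "\<And>\<sigma>. \<sigma> > 0 \<Longrightarrow> \<exists>!\<mu>. maxent_minimizer \<nu> R (h -` A) \<sigma> \<mu>"
    and pP: "prob_space P" and sP: "sets P = sets borel"
    and wc: "weak_conv_filter (\<lambda>\<sigma>. THE \<mu>. maxent_minimizer \<nu> R (h -` A) \<sigma> \<mu>) P (at_right 0)"
    using assms(5) unfolding is_maxent_posterior_def by auto
  have pn: "prob_space \<nu>" and sn: "sets \<nu> = sets borel" using rad unfolding radon_prob_def by auto
  let ?\<nu> = "distr \<nu> borel h"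
  let ?g = "inv h"
  have bg: "bij ?g" and ig: "\<And>x y. dist (?g x) (?g y) = dist x y"
    using inv_iso[OF assms(1,2)] by auto
  have ih: "inv ?g = h" using assms(1) by (rule inv_inv_eq)
  have sp: "space \<nu> = UNIV" using sets_eq_imp_space_eq[OF sn] by simp
  have mh: "h \<in> measurable \<nu> borel" using iso_meas[OF assms(2)] sn
    by (simp add: measurable_def sp)
  have pn': "prob_space ?\<nu>" using prob_space.prob_space_distr[OF pn mh] .
  have sn': "sets ?\<nu> = sets borel" by simp
  have nuback: "distr ?\<nu> borel ?g = \<nu>" by (rule distr_inv[OF assms(1,2) sn])
  have Ag: "?g -` (h -` A) = A" using assms(1)
    by (auto simp: bij_is_surj surj_f_inv_f)
  have key: "maxent_minimizer ?\<nu> R A \<sigma> \<mu>' \<longleftrightarrow> \<mu>' = distr (THE \<mu>. maxent_minimizer \<nu> R (h -` A) \<sigma> \<mu>) borel h"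
    if s: "\<sigma> > 0" for \<sigma> \<mu>'
  proof -
    let ?m = "THE \<mu>. maxent_minimizer \<nu> R (h -` A) \<sigma> \<mu>"
    have m: "maxent_minimizer \<nu> R (h -` A) \<sigma> ?m" using theI'[OF uq[OF s]] .
    show ?thesis
    proof
      assume mm: "maxent_minimizer ?\<nu> R A \<sigma> \<mu>'"
      have s': "sets \<mu>' = sets borel" using mm unfolding maxent_minimizer_def maxent_feasible_def by simp
      have "maxent_minimizer (distr ?\<nu> borel ?g) R (h -` A) \<sigma> (distr \<mu>' borel ?g)"
        using minimizer_distr[OF bg ig sn' pn', of R "h -` A" \<sigma> \<mu>'] mm Ag ih by simp
      then have "maxent_minimizer \<nu> R (h -` A) \<sigma> (distr \<mu>' borel ?g)" using nuback Ag by simp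
      then have "distr \<mu>' borel ?g = ?m" using uq[OF s] m by blast
      then have "distr (distr \<mu>' borel ?g) borel h = distr ?m borel h" by simp
      then show "\<mu>' = distr ?m borel h" using distr_inv[OF bg ig s'] ih by simp
    next
      assume "\<mu>' = distr ?m borel h"
      then show "maxent_minimizer ?\<nu> R A \<sigma> \<mu>'" using minimizer_distr[OF assms(1,2) sn pn m] by simp
    qed
  qed
  have uq': "\<forall>\<sigma>>0. \<exists>!\<mu>. maxent_minimizer ?\<nu> R A \<sigma> \<mu>"
  proof (intro allI impI)
    fix \<sigma> :: real assume "\<sigma> > 0"
    show "\<exists>!\<mu>. maxent_minimizer ?\<nu> R A \<sigma> \<mu>"
      by (rule ex1I[of _ "distr (THE \<mu>. maxent_minimizer \<nu> R (h -` A) \<sigma> \<mu>) borel h"])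
        (simp_all only: key[OF \<open>\<sigma> > 0\<close>])
  qed
  have theq: "(THE \<mu>. maxent_minimizer ?\<nu> R A \<sigma> \<mu>) = distr (THE \<mu>. maxent_minimizer \<nu> R (h -` A) \<sigma> \<mu>) borel h"
    if "\<sigma> > 0" for \<sigma> using key[OF that] by simp
  have spP: "space P = UNIV" using sets_eq_imp_space_eq[OF sP] by simp
  have mhP: "h \<in> measurable P borel" using iso_meas[OF assms(2)] sP
    by (simp add: measurable_def spP)
  have pP': "prob_space (distr P borel h)" using prob_space.prob_space_distr[OF pP mhP] .
  have wc': "weak_conv_filter (\<lambda>\<sigma>. THE \<mu>. maxent_minimizer ?\<nu> R A \<sigma> \<mu>) (distr P borel h) (at_right 0)"
    unfolding weak_conv_filter_def
  proof (intro allI impI)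
    fix f :: "'b \<Rightarrow> real" assume fcb: "continuous_on UNIV f \<and> bounded (range f)"
    have fh: "continuous_on UNIV (f \<circ> h) \<and> bounded (range (f \<circ> h))"
    proof
      show "continuous_on UNIV (f \<circ> h)"
        using continuous_on_compose[OF iso_cont[OF assms(2)]] fcb continuous_on_subset by blast
      have "range (f \<circ> h) \<subseteq> range f" by auto
      then show "bounded (range (f \<circ> h))" using fcb bounded_subset by blast
    qed
    have fm: "f \<in> borel_measurable borel" using fcb borel_measurable_continuous_onI by blast
    have lim: "((\<lambda>\<sigma>. \<integral>x. (f \<circ> h) x \<partial>(THE \<mu>. maxent_minimizer \<nu> R (h -` A) \<sigma> \<mu>)) \<longlongrightarrow> (\<integral>x. (f \<circ> h) x \<partial>P)) (at_right 0)"
      using wc fh unfolding weak_conv_filter_def by (simp only: o_def)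
    have e1: "(\<integral>x. f x \<partial>distr P borel h) = (\<integral>x. (f \<circ> h) x \<partial>P)"
      using integral_distr[OF mhP fm] by simp
    have ev: "\<forall>\<^sub>F \<sigma> in at_right 0. (\<integral>x. (f \<circ> h) x \<partial>(THE \<mu>. maxent_minimizer \<nu> R (h -` A) \<sigma> \<mu>))
        = (\<integral>x. f x \<partial>(THE \<mu>. maxent_minimizer ?\<nu> R A \<sigma> \<mu>))"
      using eventually_at_right_less[of "0::real"]
    proof eventually_elim
      case (elim \<sigma>)
      let ?m = "THE \<mu>. maxent_minimizer \<nu> R (h -` A) \<sigma> \<mu>"
      have m: "maxent_minimizer \<nu> R (h -` A) \<sigma> ?m" using theI'[OF uq[OF elim]] .
      have sm: "sets ?m = sets borel" using m unfolding maxent_minimizer_def maxent_feasible_def by simp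
      have spm: "space ?m = UNIV" using sets_eq_imp_space_eq[OF sm] by simp
      have mhm: "h \<in> measurable ?m borel" using iso_meas[OF assms(2)] sm
        by (simp add: measurable_def spm)
      show ?case using theq[OF elim] integral_distr[OF mhm fm] by simp
    qed
    show "((\<lambda>\<sigma>. \<integral>x. f x \<partial>(THE \<mu>. maxent_minimizer ?\<nu> R A \<sigma> \<mu>)) \<longlongrightarrow> (\<integral>x. f x \<partial>distr P borel h)) (at_right 0)"
      using tendsto_cong[OF ev] lim e1 by simp
  qed
  show ?thesis unfolding is_maxent_posterior_def
    using radon_distr[OF assms(1,2) rad] assms(3,4) uq' pP' wc' by simp
qed


lemma open_measure_lim:
  fixes B :: "'a::metric_space set"
  assumes "prob_space P" "sets P = sets borel" "open B" "B \<noteq> UNIV"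
  shows "(\<lambda>n. \<integral>x. min 1 (real n * infdist x (- B)) \<partial>P) \<longlonglongrightarrow> measure P B"
proof -
  interpret prob_space P by fact
  have sp: "space P = UNIV" using sets_eq_imp_space_eq[OF assms(2)] by simp
  have cl: "closed (- B)" "- B \<noteq> {}" using assms(3,4) by auto
  have Bm: "B \<in> sets P" using assms(2,3) by simp
  have "(\<lambda>n. \<integral>x. min 1 (real n * infdist x (- B)) \<partial>P) \<longlonglongrightarrow> (\<integral>x. indicator B x \<partial>P)"
  proof (rule integral_dominated_convergence[where w="\<lambda>_. 1"])
    show "indicator B \<in> borel_measurable P" using Bm by simp
    show "(\<lambda>x. min 1 (real n * infdist x (- B))) \<in> borel_measurable P" for n
      by (rule meas_P[OF assms(2)]) (intro continuous_intros)
    show "integrable P (\<lambda>_. 1::real)" by simp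
    show "AE x in P. norm (min 1 (real n * infdist x (- B))) \<le> 1" for n
      by (intro AE_I2) (simp add: infdist_nonneg)
    show "AE x in P. (\<lambda>n. min 1 (real n * infdist x (- B))) \<longlonglongrightarrow> indicator B x"
    proof (intro AE_I2)
      fix x
      show "(\<lambda>n. min 1 (real n * infdist x (- B))) \<longlonglongrightarrow> indicator B x"
      proof (cases "x \<in> B")
        case False
        then show ?thesis by simp
      next
        case True
        then have d: "infdist x (- B) > 0" using infdist_pos_not_in_closed[OF cl] by simp
        obtain n0 :: nat where n0: "1 / infdist x (- B) < real n0" using reals_Archimedean2 by blast
        have "\<forall>\<^sub>F n in sequentially. min 1 (real n * infdist x (- B)) = indicator B x"
          unfolding eventually_sequentially
        proof (intro exI allI impI)
          fix n assume "n0 \<le> n"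
          then have "1 / infdist x (- B) < real n" using n0 by linarith
          then have "1 \<le> real n * infdist x (- B)" using d by (simp add: field_simps)
          then show "min 1 (real n * infdist x (- B)) = indicator B x" using True by simp
        qed
        then show ?thesis by (rule tendsto_eventually)
      qed
    qed
  qed
  then show ?thesis using sp by simp
qed

lemma integrals_determine_open:
  fixes P1 P2 :: "'a::metric_space measure"
  assumes "prob_space P1" "sets P1 = sets borel" "prob_space P2" "sets P2 = sets borel"
    "\<And>f::'a \<Rightarrow> real. continuous_on UNIV f \<and> bounded (range f) \<Longrightarrow> (\<integral>x. f x \<partial>P1) = (\<integral>x. f x \<partial>P2)"
    "open B"
  shows "emeasure P1 B = emeasure P2 B"
proof (cases "B = UNIV")
  case True
  have "space P1 = UNIV" "space P2 = UNIV"
    using sets_eq_imp_space_eq[OF assms(2)] sets_eq_imp_space_eq[OF assms(4)] by auto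
  then show ?thesis using True prob_space.emeasure_space_1[OF assms(1)] prob_space.emeasure_space_1[OF assms(3)]
    by simp
next
  case False
  have eq: "(\<lambda>n. \<integral>x. min 1 (real n * infdist x (- B)) \<partial>P1) = (\<lambda>n. \<integral>x. min 1 (real n * infdist x (- B)) \<partial>P2)"
  proof
    fix n
    have "continuous_on UNIV (\<lambda>x. min 1 (real n * infdist x (- B)))" by (intro continuous_intros)
    moreover have "bounded (range (\<lambda>x. min 1 (real n * infdist x (- B))))"
      unfolding bounded_real by (rule exI[of _ 1]) (auto simp: infdist_nonneg)
    ultimately show "(\<integral>x. min 1 (real n * infdist x (- B)) \<partial>P1) = (\<integral>x. min 1 (real n * infdist x (- B)) \<partial>P2)"
      using assms(5) by blast
  qed
  have "measure P1 B = measure P2 B"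
    using LIMSEQ_unique[OF open_measure_lim[OF assms(1,2,6) False]] open_measure_lim[OF assms(3,4,6) False] eq
    by simp
  moreover have "emeasure P1 B = measure P1 B" "emeasure P2 B = measure P2 B"
  proof -
    interpret p1: prob_space P1 by fact
    interpret p2: prob_space P2 by fact
    show "emeasure P1 B = measure P1 B" "emeasure P2 B = measure P2 B"
      using p1.emeasure_eq_measure p2.emeasure_eq_measure by auto
  qed
  ultimately show ?thesis by simp
qed

theorem proposition3p8:
  fixes h :: "'a::metric_space \<Rightarrow> 'b::metric_space"
    and \<nu> :: "'a measure" and R :: "real" and A :: "'b set"
  assumes "standard_borel_type TYPE('a)" and "standard_borel_type TYPE('b)"
    and "R > 0"
    and "bij h" and "\<And>x y. dist (h x) (h y) = dist x y"
    and "radon_prob \<nu>"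
    and "closed A" and "A \<subseteq> Supp (distr \<nu> borel h)"
    and "\<exists>P. is_maxent_posterior \<nu> R (h -` A) P"
  shows "(\<exists>Q. is_maxent_posterior (distr \<nu> borel h) R A Q) \<and>
    (\<forall>P Q. is_maxent_posterior \<nu> R (h -` A) P \<longrightarrow>
       is_maxent_posterior (distr \<nu> borel h) R A Q \<longrightarrow>
       (\<forall>B. open B \<longrightarrow> emeasure Q B = emeasure P (h -` B)))"
proof (intro conjI allI impI)
  obtain P0 where "is_maxent_posterior \<nu> R (h -` A) P0" using assms(9) by blast
  then show "\<exists>Q. is_maxent_posterior (distr \<nu> borel h) R A Q"
    using posterior_distr[OF assms(4,5,7,8)] by blast
next
  fix P Q and B :: "'b set"
  assume P: "is_maxent_posterior \<nu> R (h -` A) P" and Q: "is_maxent_posterior (distr \<nu> borel h) R A Q"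
    and B: "open B"
  have Q2: "is_maxent_posterior (distr \<nu> borel h) R A (distr P borel h)"
    using posterior_distr[OF assms(4,5,7,8) P] .
  let ?M = "\<lambda>\<sigma>. THE \<mu>. maxent_minimizer (distr \<nu> borel h) R A \<sigma> \<mu>"
  have pQ: "prob_space Q" "sets Q = sets borel" "weak_conv_filter ?M Q (at_right 0)"
    using Q unfolding is_maxent_posterior_def by auto
  have pQ2: "prob_space (distr P borel h)" "sets (distr P borel h) = sets borel"
    "weak_conv_filter ?M (distr P borel h) (at_right 0)"
    using Q2 unfolding is_maxent_posterior_def by auto
  have "emeasure Q B = emeasure (distr P borel h) B"
  proof (rule integrals_determine_open[OF pQ(1,2) pQ2(1,2) _ B])
    fix f :: "'b \<Rightarrow> real" assume f: "continuous_on UNIV f \<and> bounded (range f)"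
    have l1: "((\<lambda>\<sigma>. \<integral>x. f x \<partial>?M \<sigma>) \<longlongrightarrow> (\<integral>x. f x \<partial>Q)) (at_right 0)"
      using pQ(3) f unfolding weak_conv_filter_def by blast
    have l2: "((\<lambda>\<sigma>. \<integral>x. f x \<partial>?M \<sigma>) \<longlongrightarrow> (\<integral>x. f x \<partial>distr P borel h)) (at_right 0)"
      using pQ2(3) f unfolding weak_conv_filter_def by blast
    show "(\<integral>x. f x \<partial>Q) = (\<integral>x. f x \<partial>distr P borel h)"
      using tendsto_unique[OF _ l1 l2] by simp
  qed
  also have "\<dots> = emeasure P (h -` B)"
  proof -
    have sP: "sets P = sets borel" using P unfolding is_maxent_posterior_def by simp
    have spP: "space P = UNIV" using sets_eq_imp_space_eq[OF sP] by simp
    have mhP: "h \<in> measurable P borel" using iso_meas[OF assms(5)] sP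
      by (simp add: measurable_def spP)
    show ?thesis using emeasure_distr[OF mhP] B spP by simp
  qed
  finally show "emeasure Q B = emeasure P (h -` B)" .
qed

end
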